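(* Let $\varphi:\mathbb R\to\mathbb R$ be a continuous mapping with $\sup_{x\in\mathbb R}\#\varphi^{-1}(x)<\infty$ and $U(\varphi)<\infty$. Then for any $a\in\mathbb R$ and $b>0$, the closed set $\varphi^{-1}([a-b,a+b])$ is a finite disjoint union of closed intervals $J_1,\dots,J_r$. Moreover, \[\sum_{i=1}^r|J_i|\le2\lceil b\rceil U(\varphi)\qquad\text{and}\qquad r\le\sup_{x\in\mathbb R}\#\varphi^{-1}(x),\] where $\lceil x\rceil$ is the smallest integer greater than or equal to $x$.
   Context: Notation: $|\cdot|$ is Lebesgue measure and $\#$ is cardinality. Definition: $U(\varphi)=\sup_{|I|=1}|\varphi^{-1}(I)|$, the supremum over closed intervals $I\subset\mathbb R$ of length $1$. *)

theory Defs
  imports "HOL-Analysis.Analysis"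
begin

definition fibre_card_sup :: "(real \<Rightarrow> real) \<Rightarrow> enat" where
  "fibre_card_sup \<phi> =
     (SUP y. (if finite (\<phi> -` {y}) then enat (card (\<phi> -` {y})) else \<infinity>))"

definition U :: "(real \<Rightarrow> real) \<Rightarrow> ennreal" where
  "U \<phi> = (SUP t. emeasure lborel (\<phi> -` {t..t+1}))"

end

theory Submission imports Defs begin
lemma struct_lemma:
  fixes S :: "real set"
  assumes "closed S" "bounded S" "finite (frontier S)"
  shows "\<exists>r c d. (\<forall>i<r. c i \<le> d i) \<and> (\<forall>i. Suc i < r \<longrightarrow> d i < c (Suc i))
           \<and> S = (\<Union>i<r. {c i..d i})"
  using assms
proof (induction "card (frontier S)" arbitrary: S rule: less_induct)
  case less
  show ?case
  proof (cases "S = {}")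
    case True then show ?thesis by (intro exI[of _ 0]) auto
  next
    case False
    define d where "d = Sup S"
    have dS: "d \<in> S" unfolding d_def
      using closed_contains_Sup[OF False bounded_imp_bdd_above[OF less.prems(2)] less.prems(1)] .
    have dmax: "\<forall>x\<in>S. x \<le> d" unfolding d_def
      using bounded_imp_bdd_above[OF less.prems(2)] by (simp add: cSup_upper)
    define C where "C = connected_component_set S d"
    have Cc: "connected C" "closed C" "C \<subseteq> S" "d \<in> C"
      unfolding C_def using less.prems(1) dS
      by (auto simp: closed_connected_component connected_component_subset connected_component_refl)
    have "bounded C" using Cc(3) less.prems(2) bounded_subset by blast
    hence "compact C" using Cc(2) compact_eq_bounded_closed by blast
    then obtain c d' where Ceq: "C = {c..d'}" using Cc(1) connected_compact_interval_1 by blast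
    have "d \<le> d'" "c \<le> d" using Cc(4) Ceq by auto
    hence "d' \<in> S" using Ceq Cc(3) by auto
    hence "d' = d" using dmax \<open>d \<le> d'\<close> by force
    hence Ceq: "C = {c..d}" using Ceq by simp
    have "c \<le> d" by fact
    define P where "P = {p\<in>frontier S. p < c}"
    have finP: "finite P" using less.prems(3) unfolding P_def by auto
    obtain \<delta> where \<delta>: "\<delta> > 0" "\<forall>p\<in>frontier S. p < c \<longrightarrow> p \<le> c - \<delta>"
    proof (cases "P = {}")
      case True
      then show ?thesis using that[of 1] unfolding P_def by auto
    next
      case False
      have "Max P < c" using Max_in[OF finP False] unfolding P_def by auto
      moreover have "\<forall>p\<in>frontier S. p < c \<longrightarrow> p \<le> Max P" using finP unfolding P_def by auto
      ultimately show ?thesis using that[of "c - Max P"] by auto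
    qed
    have gap: "{c-\<delta><..<c} \<inter> S = {}"
    proof (rule ccontr)
      assume ne: "{c-\<delta><..<c} \<inter> S \<noteq> {}"
      have "{c-\<delta><..<c} \<inter> frontier S = {}" using \<delta> by force
      hence "{c-\<delta><..<c} - S = {}"
        using connected_Int_frontier[of "{c-\<delta><..<c}" S] ne by auto
      hence sub: "{c-\<delta><..<c} \<subseteq> S" by blast
      have sub2: "{c-\<delta>/2..d} \<subseteq> S"
      proof
        fix x assume "x \<in> {c-\<delta>/2..d}"
        then show "x \<in> S" using sub Cc(3) Ceq \<delta>(1)
          by (cases "x < c") auto
      qed
      have "{c-\<delta>/2..d} \<subseteq> C" unfolding C_def
        by (rule connected_component_maximal) (use sub2 \<open>c \<le> d\<close> \<delta>(1) in auto)
      hence "c - \<delta>/2 \<in> C" using \<open>c \<le> d\<close> \<delta>(1) by auto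
      thus False using Ceq \<delta>(1) by auto
    qed
    have cS: "c \<in> S" using Ceq Cc(3) \<open>c \<le> d\<close> by auto
    have cF: "c \<in> frontier S"
    proof -
      have "c \<notin> interior S"
      proof
        assume "c \<in> interior S"
        then obtain e where e: "e > 0" "ball c e \<subseteq> S" using mem_interior by blast
        define x where "x = c - min e \<delta> / 2"
        have "x \<in> ball c e" using e \<delta> unfolding x_def by (auto simp: dist_real_def)
        moreover have "x \<in> {c-\<delta><..<c}" using e \<delta> unfolding x_def by auto
        ultimately show False using gap e(2) by blast
      qed
      thus ?thesis using cS less.prems(1) by (simp add: frontier_def closure_closed)
    qed
    define S' where "S' = S \<inter> {..c-\<delta>}"
    have S_eq: "S = S' \<union> {c..d}"
    proof
      show "S \<subseteq> S' \<union> {c..d}"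
      proof
        fix x assume xS: "x \<in> S"
        show "x \<in> S' \<union> {c..d}"
        proof (cases "x < c")
          case True
          then have "x \<le> c - \<delta>" using gap xS by (meson disjoint_iff greaterThanLessThan_iff not_le)
          then show ?thesis using xS unfolding S'_def by auto
        next
          case False
          then show ?thesis using xS dmax by auto
        qed
      qed
      show "S' \<union> {c..d} \<subseteq> S" using Cc(3) Ceq unfolding S'_def by auto
    qed
    have clS': "closed S'" unfolding S'_def using less.prems(1) by (simp add: closed_Int)
    have bS': "bounded S'" unfolding S'_def using less.prems(2) bounded_subset by blast
    have fr: "frontier S' \<subseteq> frontier S - {c}"
    proof
      fix x assume xf: "x \<in> frontier S'"
      hence xS': "x \<in> S'" using clS' by (simp add: frontier_def closure_closed)
      hence xle: "x \<le> c - \<delta>" and xS: "x \<in> S" unfolding S'_def by auto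
      have "x \<notin> interior S'" using xf by (simp add: frontier_def)
      have "x \<notin> interior S"
      proof
        assume "x \<in> interior S"
        then obtain e where e: "e > 0" "ball x e \<subseteq> S" using mem_interior by blast
        have "ball x (min e \<delta>) \<subseteq> S'"
        proof
          fix y assume y: "y \<in> ball x (min e \<delta>)"
          hence yS: "y \<in> S" using e by auto
          have "y < c" using y xle by (auto simp: dist_real_def)
          hence "y \<le> c - \<delta>" using gap yS by (meson disjoint_iff greaterThanLessThan_iff not_le)
          thus "y \<in> S'" using yS unfolding S'_def by auto
        qed
        hence "x \<in> interior S'" using mem_interior e \<delta> by (metis min_less_iff_conj)
        thus False using \<open>x \<notin> interior S'\<close> by blast
      qed
      thus "x \<in> frontier S - {c}" using xS xle \<delta>(1) less.prems(1)
        by (auto simp: frontier_def closure_closed)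
    qed
    have finS': "finite (frontier S')" using fr less.prems(3) finite_subset by blast
    have "card (frontier S') < card (frontier S)"
    proof (rule psubset_card_mono[OF less.prems(3)])
      show "frontier S' \<subset> frontier S" using fr cF by blast
    qed
    from less.hyps[OF this clS' bS' finS'] obtain r c0 d0 where
      IH: "\<forall>i<r. c0 i \<le> d0 i" "\<forall>i. Suc i < r \<longrightarrow> d0 i < c0 (Suc i)" "S' = (\<Union>i<r. {c0 i..d0 i})"
      by blast
    show ?thesis
    proof (intro exI conjI)
      show "\<forall>i<Suc r. (c0(r:=c)) i \<le> (d0(r:=d)) i" using IH(1) \<open>c \<le> d\<close> by auto
      show "\<forall>i. Suc i < Suc r \<longrightarrow> (d0(r:=d)) i < (c0(r:=c)) (Suc i)"
      proof (intro allI impI)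
        fix i assume "Suc i < Suc r"
        show "(d0(r:=d)) i < (c0(r:=c)) (Suc i)"
        proof (cases "Suc i = r")
          case True
          have "d0 i \<in> S'" using IH(1,3) True by auto
          hence "d0 i < c" unfolding S'_def using \<delta>(1) by auto
          thus ?thesis using True by auto
        next
          case False
          thus ?thesis using IH(2) \<open>Suc i < Suc r\<close> by auto
        qed
      qed
      show "S = (\<Union>i<Suc r. {(c0(r:=c)) i..(d0(r:=d)) i})"
        unfolding lessThan_Suc using S_eq IH(3) by auto
    qed
  qed
qed

lemma ord_lemma:
  fixes c d :: "nat \<Rightarrow> real"
  assumes "\<forall>i<r. c i \<le> d i" "\<forall>i. Suc i < r \<longrightarrow> d i < c (Suc i)"
  shows "i < j \<Longrightarrow> j < r \<Longrightarrow> d i < c j"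
proof (induction j)
  case 0 then show ?case by simp
next
  case (Suc j)
  show ?case
  proof (cases "i = j")
    case True then show ?thesis using assms Suc by auto
  next
    case False
    hence "d i < c j" using Suc by auto
    also have "c j \<le> d j" using assms Suc by auto
    also have "d j < c (Suc j)" using assms Suc by auto
    finally show ?thesis .
  qed
qed

lemma ivt_strict:
  fixes f :: "real \<Rightarrow> real"
  assumes "continuous_on UNIV f" "u < v" "(f u < y \<and> y < f v) \<or> (f v < y \<and> y < f u)"
  shows "\<exists>x. u < x \<and> x < v \<and> f x = y"
proof -
  have co: "continuous_on {u..v} f" using assms(1) continuous_on_subset by blast
  from assms(3) show ?thesis
  proof
    assume h: "f u < y \<and> y < f v"
    then obtain x where "x \<ge> u" "x \<le> v" "f x = y" using IVT'[of f u y v] co assms(2) by auto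
    then show ?thesis using h by (intro exI[of _ x]) (auto simp: order.order_iff_strict)
  next
    assume h: "f v < y \<and> y < f u"
    then obtain x where "x \<ge> u" "x \<le> v" "f x = y" using IVT2'[of f v y u] co assms(2) by auto
    then show ?thesis using h by (intro exI[of _ x]) (auto simp: order.order_iff_strict)
  qed
qed

lemma halfline_inf:
  fixes S :: "real set"
  assumes "S \<in> sets lborel" "emeasure lborel S < \<infinity>" "{M..M+t} \<subseteq> S \<or> {M-t..M} \<subseteq> S" "t \<ge> 0"
  shows "ennreal t \<le> emeasure lborel S"
proof -
  from assms(3) show ?thesis
  proof
    assume "{M..M+t} \<subseteq> S"
    hence "emeasure lborel {M..M+t} \<le> emeasure lborel S" using assms(1) by (intro emeasure_mono) auto
    thus ?thesis using assms(4) by simp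
  next
    assume "{M-t..M} \<subseteq> S"
    hence "emeasure lborel {M-t..M} \<le> emeasure lborel S" using assms(1) by (intro emeasure_mono) auto
    thus ?thesis using assms(4) by simp
  qed
qed

theorem lemma3p3:
  fixes \<phi> :: "real \<Rightarrow> real" and a b :: real
  assumes "continuous_on UNIV \<phi>"
    and "fibre_card_sup \<phi> < \<infinity>"
    and "U \<phi> < \<infinity>"
    and "b > 0"
  shows "\<exists>(r::nat) (c::nat \<Rightarrow> real) (d::nat \<Rightarrow> real).
           (\<forall>i<r. c i \<le> d i)
         \<and> disjoint_family_on (\<lambda>i. {c i..d i}) {..<r}
         \<and> \<phi> -` {a-b..a+b} = (\<Union>i<r. {c i..d i})
         \<and> (\<Sum>i<r. emeasure lborel {c i..d i}) \<le> 2 * of_int \<lceil>b\<rceil> * U \<phi>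
         \<and> enat r \<le> fibre_card_sup \<phi>"
proof -
  define S where "S = \<phi> -` {a-b..a+b}"
  define fc where "fc = (\<lambda>y. if finite (\<phi> -` {y}) then enat (card (\<phi> -` {y})) else \<infinity>)"
  have fcs: "fibre_card_sup \<phi> = (SUP y. fc y)" unfolding fc_def fibre_card_sup_def by simp
  have fc_le: "fc y \<le> fibre_card_sup \<phi>" for y unfolding fcs by (rule SUP_upper) auto
  have fin_fib: "finite (\<phi> -` {y})" for y
  proof (rule ccontr)
    assume "\<not> finite (\<phi> -` {y})"
    hence "fc y = \<infinity>" unfolding fc_def by simp
    thus False using fc_le[of y] assms(2) by simp
  qed
  have clS: "closed S" unfolding S_def using assms(1) by (intro closed_vimage) auto
  have sets_cl: "A \<in> sets lborel" if "closed A" for A :: "real set"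
    using that by (simp add: borel_closed)
  have SS: "S \<in> sets lborel" using sets_cl clS .
  have frS: "frontier S \<subseteq> \<phi> -` {a-b} \<union> \<phi> -` {a+b}"
  proof
    fix x assume xf: "x \<in> frontier S"
    hence xS: "x \<in> S" and xi: "x \<notin> interior S" using clS by (auto simp: frontier_def closure_closed)
    have "\<not> (a-b < \<phi> x \<and> \<phi> x < a+b)"
    proof
      assume h: "a-b < \<phi> x \<and> \<phi> x < a+b"
      have "open (\<phi> -` {a-b<..<a+b})" using assms(1) by (intro open_vimage) auto
      moreover have "\<phi> -` {a-b<..<a+b} \<subseteq> S" unfolding S_def by auto
      moreover have "x \<in> \<phi> -` {a-b<..<a+b}" using h by auto
      ultimately have "x \<in> interior S" by (meson interiorI)
      thus False using xi by blast
    qed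
    thus "x \<in> \<phi> -` {a-b} \<union> \<phi> -` {a+b}" using xS unfolding S_def by auto
  qed
  have finF: "finite (frontier S)" using frS fin_fib finite_subset by blast
  define K where "K = nat \<lceil>b\<rceil>"
  have K1: "K \<ge> 1" unfolding K_def using assms(4) by linarith
  have bK: "b \<le> real K" unfolding K_def using assms(4) by linarith
  have cover: "S \<subseteq> (\<Union>k<2*K. \<phi> -` {a-b+real k..a-b+real k+1})"
  proof
    fix x assume "x \<in> S"
    hence h: "a-b \<le> \<phi> x" "\<phi> x \<le> a+b" unfolding S_def by auto
    define t where "t = \<phi> x - (a-b)"
    have t: "0 \<le> t" "t \<le> 2 * real K" using h bK unfolding t_def by auto
    define k where "k = min (nat \<lfloor>t\<rfloor>) (2*K - 1)"
    have "real k \<le> t \<and> t \<le> real k + 1 \<and> k < 2*K"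
    proof (cases "nat \<lfloor>t\<rfloor> \<le> 2*K - 1")
      case True
      hence "k = nat \<lfloor>t\<rfloor>" unfolding k_def by simp
      thus ?thesis using t True K1 by linarith
    next
      case False
      hence "k = 2*K - 1" unfolding k_def by simp
      moreover have "real (2*K - 1) = 2 * real K - 1" using K1 by simp
      ultimately show ?thesis using t False K1 by linarith
    qed
    thus "x \<in> (\<Union>k<2*K. \<phi> -` {a-b+real k..a-b+real k+1})" unfolding t_def by force
  qed
  have meas: "emeasure lborel S \<le> 2 * of_int \<lceil>b\<rceil> * U \<phi>"
  proof -
    have cl: "closed (\<phi> -` {a-b+real k..a-b+real k+1})" for k
      using assms(1) by (intro closed_vimage) auto
    have "emeasure lborel S \<le> emeasure lborel (\<Union>k<2*K. \<phi> -` {a-b+real k..a-b+real k+1})"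
      using cover cl sets_cl by (intro emeasure_mono) auto
    also have "\<dots> \<le> (\<Sum>k<2*K. emeasure lborel (\<phi> -` {a-b+real k..a-b+real k+1}))"
      using cl sets_cl by (intro emeasure_subadditive_finite) auto
    also have "\<dots> \<le> (\<Sum>k<2*K. U \<phi>)"
    proof (rule sum_mono)
      fix k show "emeasure lborel (\<phi> -` {a-b+real k..a-b+real k+1}) \<le> U \<phi>"
        unfolding U_def by (rule SUP_upper) auto
    qed
    also have "\<dots> = of_nat (2*K) * U \<phi>" by simp
    also have "of_nat (2*K) = (2 * of_int \<lceil>b\<rceil> :: ennreal)"
    proof -
      have "0 \<le> real_of_int \<lceil>b\<rceil>" using assms(4) by linarith
      hence "ennreal (2 * real_of_int \<lceil>b\<rceil>) = ennreal 2 * ennreal (real_of_int \<lceil>b\<rceil>)"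
        by (intro ennreal_mult) auto
      thus ?thesis unfolding K_def using assms(4)
        by (simp add: ennreal_of_nat_eq_real_of_nat)
    qed
    finally show ?thesis .
  qed
  have fin_meas: "emeasure lborel S < \<infinity>"
    using meas assms(3) by (simp add: ennreal_mult_less_top order.strict_trans1 ennreal_mult_eq_top_iff)
  obtain M0 where M0: "\<forall>p\<in>frontier S. \<bar>p\<bar> \<le> M0"
    using finite_imp_bounded[OF finF] bounded_real by blast
  define M where "M = \<bar>M0\<bar> + 1"
  have M: "\<forall>p\<in>frontier S. \<bar>p\<bar> < M" "M > 0" using M0 unfolding M_def by force+
  have bS: "bounded S"
  proof (rule ccontr)
    assume "\<not> bounded S"
    then obtain x where xS: "x \<in> S" "\<bar>x\<bar> > M" unfolding bounded_real by (meson not_le)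
    obtain B where B: "emeasure lborel S = ennreal B" "B \<ge> 0"
      using fin_meas by (metis ennreal_cases less_irrefl infinity_ennreal_def)
    have "{M<..} \<subseteq> S \<or> {..<-M} \<subseteq> S"
    proof (cases "x > M")
      case True
      have "{M<..} \<inter> S \<noteq> {}" using xS True by auto
      moreover have "{M<..} \<inter> frontier S = {}" using M by force
      ultimately have "{M<..} - S = {}" using connected_Int_frontier[of "{M<..}" S] connected_Ioi by blast
      thus ?thesis by blast
    next
      case False
      hence "x < -M" using xS by linarith
      have "{..<-M} \<inter> S \<noteq> {}" using xS \<open>x < -M\<close> by auto
      moreover have "{..<-M} \<inter> frontier S = {}" using M by force
      ultimately have "{..<-M} - S = {}" using connected_Int_frontier[of "{..<-M}" S] connected_Iio by blast
      thus ?thesis by blast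
    qed
    hence "{M+1..M+1+(B+1)} \<subseteq> S \<or> {-M-1-(B+1)..-M-1} \<subseteq> S" using B(2) by force
    hence "ennreal (B+1) \<le> emeasure lborel S"
      using halfline_inf[OF SS fin_meas, of "M+1" "B+1"] halfline_inf[OF SS fin_meas, of "-M-1" "B+1"] B(2)
      by (metis add_nonneg_nonneg zero_le_one)
    thus False using B by simp
  qed
  obtain r c d where cd: "\<forall>i<r. c i \<le> d i" "\<forall>i. Suc i < r \<longrightarrow> d i < c (Suc i)"
      "S = (\<Union>i<r. {c i..d i})"
    using struct_lemma[OF clS bS finF] by blast
  have ord: "\<And>i j. i < j \<Longrightarrow> j < r \<Longrightarrow> d i < c j" using ord_lemma[OF cd(1,2)] by blast
  have disj: "disjoint_family_on (\<lambda>i. {c i..d i}) {..<r}"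
    unfolding disjoint_family_on_def
  proof (intro ballI impI)
    fix i j assume "i \<in> {..<r}" "j \<in> {..<r}" "i \<noteq> j"
    hence "d i < c j \<or> d j < c i" using ord by (metis lessThan_iff nat_neq_iff)
    thus "{c i..d i} \<inter> {c j..d j} = {}" by auto
  qed
  have sumeq: "(\<Sum>i<r. emeasure lborel {c i..d i}) = emeasure lborel S"
    unfolding cd(3) by (rule sum_emeasure) (use disj in auto)
  have count: "enat r \<le> fibre_card_sup \<phi>"
  proof (cases "r = 0")
    case True then show ?thesis by (simp add: zero_enat_def[symmetric])
  next
    case False
    hence r1: "r \<ge> 1" by simp
    have cmono: "c i \<le> c j" if "i \<le> j" "j < r" for i j
    proof (cases "i = j")
      case False
      hence "i < j" "i < r" using that by auto
      have "c i \<le> d i" "c j \<le> d j" using cd(1) \<open>i < r\<close> that(2) by blast+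
      moreover have "d i < c j" using ord \<open>i < j\<close> that(2) by blast
      ultimately show ?thesis by linarith
    qed simp
    have dmono: "d i \<le> d j" if "i \<le> j" "j < r" for i j
    proof (cases "i = j")
      case False
      hence "i < j" "i < r" using that by auto
      have "c i \<le> d i" "c j \<le> d j" using cd(1) \<open>i < r\<close> that(2) by blast+
      moreover have "d i < c j" using ord \<open>i < j\<close> that(2) by blast
      ultimately show ?thesis by linarith
    qed simp
    define m where "m = (\<lambda>j. if j = 0 then c 0 - 1 else if j = r then d (r-1) + 1
                             else (d (j-1) + c j) / 2)"
    have mc: "m i < c i" if "i < r" for i
    proof (cases "i = 0")
      case True then show ?thesis unfolding m_def by simp
    next
      case False
      have "d (i-1) < c i" using ord[of "i-1" i] that False by simp
      thus ?thesis using False that unfolding m_def by simp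
    qed
    have dm: "d i < m (Suc i)" if "i < r" for i
    proof (cases "Suc i = r")
      case True
      hence "r - 1 = i" by simp
      then show ?thesis unfolding m_def using True by simp
    next
      case False
      have "d i < c (Suc i)" using cd(2) that False by simp
      thus ?thesis using False that unfolding m_def by simp
    qed
    have mS: "m j \<notin> S" if "j \<le> r" for j
    proof
      assume "m j \<in> S"
      then obtain i where i: "i < r" "c i \<le> m j" "m j \<le> d i" using cd(3) by auto
      show False
      proof (cases "j = 0")
        case True
        thus False using i mc[of 0] cmono[of 0 i] r1 by simp
      next
        case j0: False
        show False
        proof (cases "j = r")
          case True
          have "i \<le> r - 1" "r - 1 < r" using i(1) r1 by auto
          hence "d i \<le> d (r-1)" using dmono by blast
          moreover have "d (r-1) < m r" using dm[of "r-1"] r1 by simp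
          ultimately show False using i True by simp
        next
          case False
          hence jr: "j < r" using that by simp
          have "m j < c j" using mc jr by simp
          moreover have "d (j-1) < m j" using dm[of "j-1"] jr j0 by simp
          ultimately show False
          proof (cases "j \<le> i")
            case True
            hence "c j \<le> c i" using cmono i(1) by blast
            thus False using i \<open>m j < c j\<close> by linarith
          next
            case False
            hence "i \<le> j - 1" "j - 1 < r" using jr by auto
            hence "d i \<le> d (j-1)" using dmono by blast
            thus False using i \<open>d (j-1) < m j\<close> by linarith
          qed
        qed
      qed
    qed
    have mout: "\<phi> (m j) < a-b \<or> \<phi> (m j) > a+b" if "j \<le> r" for j
      using mS[OF that] unfolding S_def by auto
    define g where "g = (\<lambda>j. if \<phi> (m j) > a+b then \<phi> (m j) - (a+b) else (a-b) - \<phi> (m j))"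
    have gpos: "g j > 0" if "j \<le> r" for j using mout[OF that] unfolding g_def by auto
    define \<epsilon> where "\<epsilon> = Min (g ` {..r}) / 2"
    have "Min (g ` {..r}) > 0" using gpos by (subst Min_gr_iff) auto
    hence epos: "\<epsilon> > 0" unfolding \<epsilon>_def by simp
    have elt: "\<epsilon> < g j" if "j \<le> r" for j
    proof -
      have "Min (g ` {..r}) \<le> g j" using that by (intro Min_le) auto
      thus ?thesis using gpos[OF that] unfolding \<epsilon>_def by simp
    qed
    define y where "y = (\<lambda>j. if \<phi> (m j) > a+b then a+b+\<epsilon> else a-b-\<epsilon>)"
    have ybetw: "(\<phi> (m j) < y j \<and> y j < \<phi> p) \<or> (\<phi> p < y j \<and> y j < \<phi> (m j))"
      if "j \<le> r" "p \<in> S" for j p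
      using elt[OF that(1)] epos that(2) mout[OF that(1)] unfolding y_def g_def S_def by auto
    have cS: "c i \<in> S" "d i \<in> S" if "i < r" for i using cd(1,3) that by auto
    have "\<forall>i. \<exists>x. i < r \<longrightarrow> m i < x \<and> x < c i \<and> \<phi> x = y i"
    proof (intro allI)
      fix i show "\<exists>x. i < r \<longrightarrow> m i < x \<and> x < c i \<and> \<phi> x = y i"
      proof (cases "i < r")
        case True
        have "\<exists>x. m i < x \<and> x < c i \<and> \<phi> x = y i"
          using ivt_strict[OF assms(1) mc[OF True]] ybetw[of i "c i"] cS(1)[OF True] True by auto
        thus ?thesis by blast
      qed auto
    qed
    then obtain L where L: "\<And>i. i < r \<Longrightarrow> m i < L i \<and> L i < c i \<and> \<phi> (L i) = y i"
      by metis
    have "\<forall>i. \<exists>x. i < r \<longrightarrow> d i < x \<and> x < m (Suc i) \<and> \<phi> x = y (Suc i)"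
    proof (intro allI)
      fix i show "\<exists>x. i < r \<longrightarrow> d i < x \<and> x < m (Suc i) \<and> \<phi> x = y (Suc i)"
      proof (cases "i < r")
        case True
        have "\<exists>x. d i < x \<and> x < m (Suc i) \<and> \<phi> x = y (Suc i)"
          using ivt_strict[OF assms(1) dm[OF True]] ybetw[of "Suc i" "d i"] cS(2)[OF True] True by auto
        thus ?thesis by blast
      qed auto
    qed
    then obtain R where R: "\<And>i. i < r \<Longrightarrow> d i < R i \<and> R i < m (Suc i) \<and> \<phi> (R i) = y (Suc i)"
      by metis
    define q where "q = (\<lambda>k. if even k then L (k div 2) else R (k div 2))"
    have qstep: "q k < q (Suc k)" if "Suc k < 2*r" for k
    proof (cases "even k")
      case True
      then obtain i where k: "k = 2*i" by blast
      hence ir: "i < r" using that by simp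
      have "q k = L i" "q (Suc k) = R i" unfolding q_def k by auto
      thus ?thesis using L[OF ir] R[OF ir] cd(1) ir by force
    next
      case False
      then obtain i where k: "k = 2*i+1" using oddE by blast
      hence ir: "Suc i < r" using that by simp
      have "q k = R i" "q (Suc k) = L (Suc i)" unfolding q_def k by auto
      thus ?thesis using L[OF ir] R[of i] ir by force
    qed
    have qmono: "k < l \<Longrightarrow> l < 2*r \<Longrightarrow> q k < q l" for k l
    proof (induction l)
      case 0 then show ?case by simp
    next
      case (Suc l)
      show ?case
      proof (cases "k = l")
        case True then show ?thesis using qstep Suc by simp
      next
        case False
        hence "q k < q l" using Suc by simp
        also have "q l < q (Suc l)" using qstep Suc by simp
        finally show ?thesis .
      qed
    qed
    have inj: "inj_on q {..<2*r}"
    proof (rule inj_onI)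
      fix k l assume "k \<in> {..<2*r}" "l \<in> {..<2*r}" "q k = q l"
      thus "k = l" using qmono[of k l] qmono[of l k] by (metis lessThan_iff nat_neq_iff less_irrefl)
    qed
    define A where "A = \<phi> -` {a+b+\<epsilon>}"
    define B where "B = \<phi> -` {a-b-\<epsilon>}"
    have yAB: "y j = a+b+\<epsilon> \<or> y j = a-b-\<epsilon>" for j unfolding y_def by auto
    have qAB: "q ` {..<2*r} \<subseteq> A \<union> B"
    proof
      fix z assume "z \<in> q ` {..<2*r}"
      then obtain k where k: "k < 2*r" "z = q k" by auto
      have "\<exists>j. \<phi> z = y j"
      proof (cases "even k")
        case True
        then show ?thesis using L[of "k div 2"] k unfolding q_def by auto
      next
        case False
        then show ?thesis using R[of "k div 2"] k unfolding q_def by auto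
      qed
      then show "z \<in> A \<union> B" using yAB unfolding A_def B_def by force
    qed
    have "2*r = card (q ` {..<2*r})" using card_image[OF inj] by simp
    also have "\<dots> \<le> card (A \<union> B)" using qAB fin_fib unfolding A_def B_def
      by (intro card_mono) auto
    also have "\<dots> \<le> card A + card B" by (rule card_Un_le)
    finally have "r \<le> card A \<or> r \<le> card B" by linarith
    moreover have "enat (card A) \<le> fibre_card_sup \<phi>"
      using fc_le[of "a+b+\<epsilon>"] fin_fib unfolding fc_def A_def by simp
    moreover have "enat (card B) \<le> fibre_card_sup \<phi>"
      using fc_le[of "a-b-\<epsilon>"] fin_fib unfolding fc_def B_def by simp
    ultimately show ?thesis by (meson enat_ord_simps(1) order_trans)
  qed
  show ?thesis
    unfolding S_def[symmetric]
  proof (intro exI conjI)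
    show "\<forall>i<r. c i \<le> d i" using cd(1) .
    show "disjoint_family_on (\<lambda>i. {c i..d i}) {..<r}" using disj .
    show "S = (\<Union>i<r. {c i..d i})" using cd(3) .
    show "(\<Sum>i<r. emeasure lborel {c i..d i}) \<le> 2 * of_int \<lceil>b\<rceil> * U \<phi>"
      using sumeq meas by simp
    show "enat r \<le> fibre_card_sup \<phi>" using count .
  qed
qed
end
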